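(* Let $\mathbb{F}$ be a field and let $n>4$ be an integer. Then for each $p\in\{2,\ldots,n-3\}$ and each non-negative integer $q\le p$ there exists a unital $\mathbb{F}$-algebra $\mathcal{A}$ with $\dim\mathcal{A}=n$ and $l(\mathcal{A})=2^{p}+2^{q}$.
   Context: All algebras are finite-dimensional, unital, not necessarily associative algebras over the field $\mathbb{F}$. For a finite generating set $S$ of an algebra $\mathcal{A}$, a word in $S$ is any product (with any bracketing) of finitely many elements of $S$; its length is the number of factors, and $1$ is a word of length $0$. $L_i(S)$ is the linear span of all words in $S$ of length at most $i$. The length of $S$ is $l(S)=\min\{k\ge0: L_k(S)=\mathcal{A}\}$, and $l(\mathcal{A})=\max\{l(S): S\text{ a finite generating set of }\mathcal{A}\}$. *)

theory Defs
  imports Main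
begin

text \<open>An n-dimensional (not necessarily associative) algebra over a field 'a is
modelled on the coordinate space {v :: nat => 'a. v i = 0 for i >= n}, with a
bilinear multiplication given by structure constants c i j k
(e_i * e_j = sum_k c i j k e_k). Every n-dimensional algebra is isomorphic to one
of this form.\<close>

definition vecs :: "nat \<Rightarrow> (nat \<Rightarrow> 'a::field) set" where
  "vecs n = {v. \<forall>i\<ge>n. v i = 0}"

definition sc_mult :: "nat \<Rightarrow> (nat \<Rightarrow> nat \<Rightarrow> nat \<Rightarrow> 'a::field)
    \<Rightarrow> (nat \<Rightarrow> 'a) \<Rightarrow> (nat \<Rightarrow> 'a) \<Rightarrow> (nat \<Rightarrow> 'a)" where
  "sc_mult n c x y = (\<lambda>k. if k < n then (\<Sum>i<n. \<Sum>j<n. c i j k * x i * y j) else 0)"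

definition lin_span :: "(nat \<Rightarrow> 'a::field) set \<Rightarrow> (nat \<Rightarrow> 'a) set" where
  "lin_span W = {x. \<exists>T c. finite T \<and> T \<subseteq> W \<and> x = (\<lambda>k. \<Sum>w\<in>T. c w * w k)}"

inductive is_word :: "('b \<Rightarrow> 'b \<Rightarrow> 'b) \<Rightarrow> 'b \<Rightarrow> 'b set \<Rightarrow> 'b \<Rightarrow> nat \<Rightarrow> bool"
  for mult :: "'b \<Rightarrow> 'b \<Rightarrow> 'b" and one :: 'b and S :: "'b set" where
  word_one: "is_word mult one S one 0"
| word_gen: "s \<in> S \<Longrightarrow> is_word mult one S s 1"
| word_mult: "is_word mult one S a i \<Longrightarrow> is_word mult one S b j \<Longrightarrow> 1 \<le> i \<Longrightarrow> 1 \<le> j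
     \<Longrightarrow> is_word mult one S (mult a b) (i + j)"

definition L_words :: "nat \<Rightarrow> (nat \<Rightarrow> nat \<Rightarrow> nat \<Rightarrow> 'a::field) \<Rightarrow> (nat \<Rightarrow> 'a)
    \<Rightarrow> (nat \<Rightarrow> 'a) set \<Rightarrow> nat \<Rightarrow> (nat \<Rightarrow> 'a) set" where
  "L_words n c e S i = lin_span {w. \<exists>k\<le>i. is_word (sc_mult n c) e S w k}"

definition generating_set :: "nat \<Rightarrow> (nat \<Rightarrow> nat \<Rightarrow> nat \<Rightarrow> 'a::field) \<Rightarrow> (nat \<Rightarrow> 'a)
    \<Rightarrow> (nat \<Rightarrow> 'a) set \<Rightarrow> bool" where
  "generating_set n c e S \<longleftrightarrow> finite S \<and> S \<subseteq> vecs n \<and>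
     lin_span {w. \<exists>k. is_word (sc_mult n c) e S w k} = vecs n"

definition set_length :: "nat \<Rightarrow> (nat \<Rightarrow> nat \<Rightarrow> nat \<Rightarrow> 'a::field) \<Rightarrow> (nat \<Rightarrow> 'a)
    \<Rightarrow> (nat \<Rightarrow> 'a) set \<Rightarrow> nat" where
  "set_length n c e S = (LEAST k. L_words n c e S k = vecs n)"

definition algebra_length_is :: "nat \<Rightarrow> (nat \<Rightarrow> nat \<Rightarrow> nat \<Rightarrow> 'a::field) \<Rightarrow> (nat \<Rightarrow> 'a)
    \<Rightarrow> nat \<Rightarrow> bool" where
  "algebra_length_is n c e m \<longleftrightarrow>
     (\<exists>S. generating_set n c e S \<and> set_length n c e S = m) \<and>
     (\<forall>S. generating_set n c e S \<longrightarrow> set_length n c e S \<le> m)"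

definition is_unit :: "nat \<Rightarrow> (nat \<Rightarrow> nat \<Rightarrow> nat \<Rightarrow> 'a::field) \<Rightarrow> (nat \<Rightarrow> 'a) \<Rightarrow> bool" where
  "is_unit n c e \<longleftrightarrow> e \<in> vecs n \<and>
     (\<forall>x\<in>vecs n. sc_mult n c e x = x \<and> sc_mult n c x e = x)"

end

theory Submission
  imports Defs
begin


definition subsp :: "(nat \<Rightarrow> 'a::field) set \<Rightarrow> bool" where
 "subsp X \<longleftrightarrow> (\<lambda>_. 0) \<in> X \<and> (\<forall>x\<in>X. \<forall>y\<in>X. (\<lambda>k. x k + y k) \<in> X) \<and> (\<forall>a. \<forall>x\<in>X. (\<lambda>k. a * x k) \<in> X)"

lemma subspD: assumes "subsp X"
  shows "(\<lambda>_. 0) \<in> X" "x \<in> X \<Longrightarrow> y \<in> X \<Longrightarrow> (\<lambda>k. x k + y k) \<in> X" "x \<in> X \<Longrightarrow> (\<lambda>k. a * x k) \<in> X"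
  using assms unfolding subsp_def by auto

lemma subsp_comb: assumes "subsp X" "x \<in> X" "y \<in> X" shows "(\<lambda>k. x k + a * y k) \<in> X"
proof -
  have "(\<lambda>k. a * y k) \<in> X" using assms subspD by blast
  from subspD(2)[OF assms(1) assms(2) this] show ?thesis .
qed

lemma span_sub: assumes "subsp X" "W \<subseteq> X" shows "lin_span W \<subseteq> X"
proof
  fix x assume "x \<in> lin_span W"
  then obtain T f where T: "finite T" "T \<subseteq> W" and x: "x = (\<lambda>k. \<Sum>w\<in>T. f w * w k)"
    unfolding lin_span_def by blast
  have "(\<lambda>k. \<Sum>w\<in>T. f w * w k) \<in> X" using T
  proof (induction T rule: finite_induct)
    case empty then show ?case using subspD(1)[OF assms(1)] by simp
  next
    case (insert w T)
    have "(\<lambda>k. f w * w k) \<in> X" using assms insert subspD(3) by blast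
    moreover have "(\<lambda>k. \<Sum>w\<in>T. f w * w k) \<in> X" using insert by auto
    ultimately have "(\<lambda>k. f w * w k + (\<Sum>w\<in>T. f w * w k)) \<in> X" using subspD(2)[OF assms(1)] by blast
    then show ?case using insert by simp
  qed
  then show "x \<in> X" using x by simp
qed

lemma span_inc: "w \<in> W \<Longrightarrow> w \<in> lin_span W"
  unfolding lin_span_def
  by (rule CollectI, rule exI[of _ "{w}"], rule exI[of _ "\<lambda>_. 1"]) auto

lemma span_mono: "W \<subseteq> V \<Longrightarrow> lin_span W \<subseteq> lin_span V"
  unfolding lin_span_def by blast

lemma sum_restrict_sub: "finite A \<Longrightarrow> B \<subseteq> A \<Longrightarrow> (\<Sum>w\<in>A. if w \<in> B then h w else 0) = (\<Sum>w\<in>B. h w)"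
  by (simp add: sum.inter_restrict[symmetric] Int_absorb1)

lemma subsp_span: "subsp (lin_span W)"
  unfolding subsp_def
proof (intro conjI ballI allI)
  show "(\<lambda>_. 0) \<in> lin_span W" unfolding lin_span_def
    by (rule CollectI, rule exI[of _ "{}"]) auto
next
  fix x y assume "x \<in> lin_span W" "y \<in> lin_span W"
  then obtain T1 f1 T2 f2 where T: "finite T1" "T1 \<subseteq> W" "finite T2" "T2 \<subseteq> W"
     and x: "x = (\<lambda>k. \<Sum>w\<in>T1. f1 w * w k)" and y: "y = (\<lambda>k. \<Sum>w\<in>T2. f2 w * w k)"
    unfolding lin_span_def by blast
  define g where "g w = (if w \<in> T1 then f1 w else 0) + (if w \<in> T2 then f2 w else 0)" for w
  have "(\<lambda>k. x k + y k) = (\<lambda>k. \<Sum>w\<in>T1\<union>T2. g w * w k)"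
  proof
    fix k
    have "(\<Sum>w\<in>T1\<union>T2. g w * w k) = (\<Sum>w\<in>T1\<union>T2. (if w \<in> T1 then f1 w * w k else 0) + (if w \<in> T2 then f2 w * w k else 0))"
      by (rule sum.cong) (simp_all add: g_def distrib_right)
    also have "\<dots> = (\<Sum>w\<in>T1\<union>T2. (if w \<in> T1 then f1 w * w k else 0)) + (\<Sum>w\<in>T1\<union>T2. (if w \<in> T2 then f2 w * w k else 0))"
      by (rule sum.distrib)
    also have "\<dots> = x k + y k"
      using x y T by (simp add: sum_restrict_sub)
    finally show "x k + y k = (\<Sum>w\<in>T1\<union>T2. g w * w k)" by (rule sym)
  qed
  then show "(\<lambda>k. x k + y k) \<in> lin_span W" unfolding lin_span_def using T
    by (intro CollectI exI[of _ "T1\<union>T2"] exI[of _ g]) auto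
next
  fix a x assume "x \<in> lin_span W"
  then obtain T f where T: "finite T" "T \<subseteq> W" and x: "x = (\<lambda>k. \<Sum>w\<in>T. f w * w k)"
    unfolding lin_span_def by blast
  have "(\<lambda>k. a * x k) = (\<lambda>k. \<Sum>w\<in>T. (a * f w) * w k)" using x by (simp add: sum_distrib_left mult.assoc)
  then show "(\<lambda>k. a * x k) \<in> lin_span W" unfolding lin_span_def using T
    by (intro CollectI exI[of _ T] exI[of _ "\<lambda>w. a * f w"]) auto
qed

lemma span_sub_span: "W \<subseteq> lin_span V \<Longrightarrow> lin_span W \<subseteq> lin_span V"
  by (rule span_sub[OF subsp_span])

lemma subsp_vecs: "subsp (vecs n)"
  unfolding subsp_def vecs_def by auto

lemma mult_add_left: "sc_mult n c (\<lambda>k. x k + x' k) y = (\<lambda>k. sc_mult n c x y k + sc_mult n c x' y k)"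
  by (auto simp: sc_mult_def distrib_left distrib_right sum.distrib)
lemma mult_scale_left: "sc_mult n c (\<lambda>k. a * x k) y = (\<lambda>k. a * sc_mult n c x y k)"
  by (auto simp: sc_mult_def sum_distrib_left mult.assoc mult.left_commute)
lemma mult_zero_left: "sc_mult n c (\<lambda>_. 0) y = (\<lambda>_. 0)"
  by (auto simp: sc_mult_def)
lemma mult_add_right: "sc_mult n c x (\<lambda>k. y k + y' k) = (\<lambda>k. sc_mult n c x y k + sc_mult n c x y' k)"
  by (auto simp: sc_mult_def distrib_left distrib_right sum.distrib)
lemma mult_scale_right: "sc_mult n c x (\<lambda>k. a * y k) = (\<lambda>k. a * sc_mult n c x y k)"
  by (auto simp: sc_mult_def sum_distrib_left mult.assoc mult.left_commute)
lemma mult_zero_right: "sc_mult n c x (\<lambda>_. 0) = (\<lambda>_. 0)"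
  by (auto simp: sc_mult_def)

lemma bilin_span:
  assumes ab: "\<And>a b. a \<in> A \<Longrightarrow> b \<in> B \<Longrightarrow> sc_mult n c a b \<in> P" and P: "subsp P"
    and x: "x \<in> lin_span A" and y: "y \<in> lin_span B"
  shows "sc_mult n c x y \<in> P"
proof -
  have "lin_span B \<subseteq> {y. sc_mult n c a y \<in> P}" if a: "a \<in> A" for a
  proof (rule span_sub)
    show "subsp {y. sc_mult n c a y \<in> P}" unfolding subsp_def
      using subspD[OF P] by (simp add: mult_add_right mult_scale_right mult_zero_right)
    show "B \<subseteq> {y. sc_mult n c a y \<in> P}" using ab a by auto
  qed
  then have "lin_span A \<subseteq> {x. \<forall>y\<in>lin_span B. sc_mult n c x y \<in> P}"
  proof (intro span_sub)
    show "subsp {x. \<forall>y\<in>lin_span B. sc_mult n c x y \<in> P}" unfolding subsp_def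
      using subspD[OF P] by (simp add: mult_add_left mult_scale_left mult_zero_left)
  qed auto
  then show ?thesis using x y by auto
qed

lemma word_vecs: assumes "is_word (sc_mult n c) e S w k" "e \<in> vecs n" "S \<subseteq> vecs n" shows "w \<in> vecs n"
  using assms by induction (auto simp: vecs_def sc_mult_def)

lemma word0: "is_word m e S w 0 \<Longrightarrow> w = e"
  by (erule is_word.cases) auto

lemma L_mono: "i \<le> j \<Longrightarrow> L_words n c e S i \<subseteq> L_words n c e S j"
  unfolding L_words_def by (rule span_mono) (blast intro: le_trans)

lemma word_L: "is_word (sc_mult n c) e S w k \<Longrightarrow> k \<le> i \<Longrightarrow> w \<in> L_words n c e S i"
  unfolding L_words_def by (rule span_inc) auto

lemma L_mult: assumes unit: "is_unit n c e" and S: "S \<subseteq> vecs n"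
  and x: "x \<in> L_words n c e S i" and y: "y \<in> L_words n c e S j"
  shows "sc_mult n c x y \<in> L_words n c e S (i+j)"
  unfolding L_words_def
proof (rule bilin_span[OF _ subsp_span])
  show "x \<in> lin_span {w. \<exists>k\<le>i. is_word (sc_mult n c) e S w k}" using x unfolding L_words_def .
  show "y \<in> lin_span {w. \<exists>k\<le>j. is_word (sc_mult n c) e S w k}" using y unfolding L_words_def .
  fix a b assume a: "a \<in> {w. \<exists>k\<le>i. is_word (sc_mult n c) e S w k}" and b: "b \<in> {w. \<exists>k\<le>j. is_word (sc_mult n c) e S w k}"
  then obtain i' j' where ai: "is_word (sc_mult n c) e S a i'" "i' \<le> i" and bj: "is_word (sc_mult n c) e S b j'" "j' \<le> j" by auto
  have ev: "e \<in> vecs n" using unit by (simp add: is_unit_def)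
  have av: "a \<in> vecs n" by (rule word_vecs[OF ai(1) ev S])
  have bv: "b \<in> vecs n" by (rule word_vecs[OF bj(1) ev S])
  show "sc_mult n c a b \<in> lin_span {w. \<exists>k\<le>i+j. is_word (sc_mult n c) e S w k}"
  proof (cases "i' = 0")
    case True
    then have "a = e" using ai(1) word0[of "sc_mult n c" e S a] by simp
    then have "sc_mult n c a b = b" using unit bv by (simp add: is_unit_def)
    moreover have "b \<in> {w. \<exists>k\<le>i+j. is_word (sc_mult n c) e S w k}" using bj by (intro CollectI exI[of _ j']) simp
    ultimately show ?thesis by (simp add: span_inc)
  next
    case i0: False
    show ?thesis
    proof (cases "j' = 0")
      case True
      then have "b = e" using bj(1) word0[of "sc_mult n c" e S b] by simp
      then have "sc_mult n c a b = a" using unit av by (simp add: is_unit_def)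
      moreover have "a \<in> {w. \<exists>k\<le>i+j. is_word (sc_mult n c) e S w k}" using ai by (intro CollectI exI[of _ i']) simp
      ultimately show ?thesis by (simp add: span_inc)
    next
      case False
      have "is_word (sc_mult n c) e S (sc_mult n c a b) (i'+j')"
        using i0 False by (intro is_word.word_mult[OF ai(1) bj(1)]) auto
      then have "sc_mult n c a b \<in> {w. \<exists>k\<le>i+j. is_word (sc_mult n c) e S w k}" using ai(2) bj(2)
        by (intro CollectI exI[of _ "i'+j'"]) simp
      then show ?thesis by (rule span_inc)
    qed
  qed
qed

lemma transfer:
  assumes unit: "is_unit n c e" and S: "S \<subseteq> vecs n"
    and TS: "\<And>t. t \<in> T \<Longrightarrow> \<exists>s\<in>S. \<exists>\<alpha>. t = (\<lambda>k. s k + \<alpha> * e k)"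
    and w: "is_word (sc_mult n c) e T w k"
  shows "w \<in> L_words n c e S k"
  using w
proof induction
  case word_one
  show ?case by (rule word_L[OF is_word.word_one]) simp
next
  case (word_gen t)
  then obtain s \<alpha> where s: "s \<in> S" and t: "t = (\<lambda>k. s k + \<alpha> * e k)" using TS by blast
  have "s \<in> L_words n c e S 1" by (rule word_L[OF is_word.word_gen[OF s]]) simp
  moreover have "e \<in> L_words n c e S 1" by (rule word_L[OF is_word.word_one]) simp
  ultimately show ?case unfolding t L_words_def by (rule subsp_comb[OF subsp_span])
next
  case (word_mult a i b j)
  show ?case using L_mult[OF unit S word_mult.IH] .
qed


definition cst :: "nat \<Rightarrow> nat \<Rightarrow> nat \<Rightarrow> nat \<Rightarrow> nat \<Rightarrow> 'a::field" where
 "cst p q i j k = (if i = 0 \<and> j = k then 1 else 0) + (if i \<noteq> 0 \<and> j = 0 \<and> i = k then 1 else 0)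
   + (if 1 \<le> i \<and> i \<le> p \<and> j = i \<and> k = i+1 then 1 else 0) + (if i = q+1 \<and> j = p+1 \<and> k = p+2 then 1 else 0)"

lemma dsum: "(\<Sum>i<n. \<Sum>j<n. (if P i j then 1 else 0) * (x i::'a::field) * y j) = (\<Sum>i<n. \<Sum>j<n. if P i j then x i * y j else 0)"
  by (intro sum.cong refl) auto

lemma dd1: "(\<Sum>j<(n::nat). if i = a \<and> j = b \<and> R then (f i j::'a::field) else 0) = (if i = a \<and> b < n \<and> R then f i b else 0)"
proof (cases "i = a \<and> R")
  case True then show ?thesis by (auto simp del: sum.delta simp: sum.delta[OF finite_lessThan])
next
  case False then show ?thesis by auto
qed

lemma dd: "(\<Sum>i<(n::nat). \<Sum>j<n. if i = a \<and> j = b \<and> R then (f i j::'a::field) else 0) = (if a < n \<and> b < n \<and> R then f a b else 0)"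
  unfolding dd1 by (cases "b < n \<and> R") (auto simp: sum.delta[OF finite_lessThan])

lemma mf: assumes "k < n" "p+2 < n" "q \<le> p"
  shows "sc_mult n (cst p q) x y k = x 0 * y k + (if k \<noteq> 0 then x k * y 0 else 0)
     + (if 2 \<le> k \<and> k \<le> p+1 then x (k-1) * y (k-1) else 0) + (if k = p+2 then x (q+1) * y (p+1) else 0)"
proof -
  have "sc_mult n (cst p q) x y k = (\<Sum>i<n. \<Sum>j<n. cst p q i j k * x i * y j)" using assms by (simp add: sc_mult_def)
  also have "\<dots> = (\<Sum>i<n. \<Sum>j<n. (if i = 0 \<and> j = k \<and> True then x i * y j else 0))
     + (\<Sum>i<n. \<Sum>j<n. (if i = k \<and> j = 0 \<and> k \<noteq> 0 then x i * y j else 0))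
     + (\<Sum>i<n. \<Sum>j<n. (if i = k - 1 \<and> j = k - 1 \<and> (2 \<le> k \<and> k \<le> p+1) then x i * y j else 0))
     + (\<Sum>i<n. \<Sum>j<n. (if i = q+1 \<and> j = p+1 \<and> k = p+2 then x i * y j else 0))"
    unfolding cst_def distrib_right sum.distrib dsum
    by (intro arg_cong2[where f="(+)"] sum.cong refl; auto)
  also have "\<dots> = x 0 * y k + (if k \<noteq> 0 then x k * y 0 else 0)
     + (if 2 \<le> k \<and> k \<le> p+1 then x (k-1) * y (k-1) else 0) + (if k = p+2 then x (q+1) * y (p+1) else 0)"
    unfolding dd using assms by auto
  finally show ?thesis .
qed

definition bd :: "nat \<Rightarrow> nat \<Rightarrow> nat \<Rightarrow> nat" where
  "bd p q t = (if t = 0 then 0 else if t \<le> p+1 then 2^(t-1) else if t = p+2 then 2^p+2^q else 1)"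

definition bv :: "nat \<Rightarrow> nat \<Rightarrow> 'a::field" where
  "bv t = (\<lambda>k. if k = t then 1 else 0)"

lemma bv_vecs: "t < n \<Longrightarrow> bv t \<in> vecs n"
  by (auto simp: bv_def vecs_def)

lemma unit_ok: assumes "p+2 < n" "q \<le> p"
  shows "is_unit n (cst p q) (bv 0 :: nat \<Rightarrow> 'a::field)"
  unfolding is_unit_def
proof (intro conjI ballI)
  show "(bv 0 :: nat \<Rightarrow> 'a) \<in> vecs n" using assms by (intro bv_vecs) simp
  fix x :: "nat \<Rightarrow> 'a" assume x: "x \<in> vecs n"
  show "sc_mult n (cst p q) (bv 0) x = x"
  proof
    fix k show "sc_mult n (cst p q) (bv 0) x k = x k"
    proof (cases "k < n")
      case True then show ?thesis using assms by (simp add: mf bv_def)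
    next
      case False then show ?thesis using x by (simp add: sc_mult_def vecs_def)
    qed
  qed
  show "sc_mult n (cst p q) x (bv 0) = x"
  proof
    fix k show "sc_mult n (cst p q) x (bv 0) k = x k"
    proof (cases "k < n")
      case True then show ?thesis using assms by (simp add: mf bv_def)
    next
      case False then show ?thesis using x by (simp add: sc_mult_def vecs_def)
    qed
  qed
qed

lemma one_le_2pow: "(1::nat) \<le> 2^p"
  by simp

lemma one_le_m: "Suc 0 \<le> (2::nat)^p + 2^q"
  using one_le_2pow[of p] by linarith

lemma bd_pos: "t \<noteq> 0 \<Longrightarrow> 1 \<le> bd p q t"
  using one_le_m[of p q] by (auto simp: bd_def)

lemma bd_le: assumes "q \<le> p" shows "bd p q t \<le> 2^p + 2^q"
proof (cases "t = 0 \<or> t > p+1")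
  case True then show ?thesis using one_le_m[of p q] by (auto simp: bd_def)
next
  case False
  then have "(2::nat)^(t-1) \<le> 2^p" by (intro power_increasing) auto
  then have "(2::nat)^(t-1) \<le> 2^p + 2^q" by linarith
  then show ?thesis using False by (auto simp: bd_def)
qed

lemma weight:
  assumes pn: "p+2 < n" and qp: "q \<le> p" and T0: "\<forall>s\<in>T. s 0 = 0"
    and w: "is_word (sc_mult n (cst p q)) (bv 0 :: nat \<Rightarrow> 'a::field) T w k"
  shows "1 \<le> k \<Longrightarrow> bd p q t < k \<Longrightarrow> w t = 0"
  using w
proof (induction arbitrary: t)
  case word_one then show ?case by simp
next
  case (word_gen s)
  then have "t = 0" using bd_pos[of t p q] by (cases "t = 0") auto
  then show ?case using T0 word_gen by simp
next
  case (word_mult a i b j)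
  have a0: "a 0 = 0" and b0: "b 0 = 0" using word_mult by (auto simp: bd_def)
  show ?case
  proof (cases "t < n")
    case False then show ?thesis by (simp add: sc_mult_def)
  next
    case tn: True
    have t3: "(if 2 \<le> t \<and> t \<le> p+1 then a (t-1) * b (t-1) else 0) = 0"
    proof (cases "2 \<le> t \<and> t \<le> p+1")
      case True
      then have bt: "bd p q t = 2 * 2^(t-2)" "bd p q (t-1) = 2^(t-2)"
        by (auto simp: bd_def simp flip: power_Suc)
      then have "bd p q (t-1) < i \<or> bd p q (t-1) < j" using word_mult.prems by auto
      then have "a (t-1) = 0 \<or> b (t-1) = 0" using word_mult by auto
      then show ?thesis by auto
    qed auto
    have t4: "(if t = p+2 then a (q+1) * b (p+1) else 0) = 0"
    proof (cases "t = p+2")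
      case True
      then have "bd p q (q+1) = 2^q" "bd p q (p+1) = 2^p" "bd p q t = 2^p + 2^q" using qp by (auto simp: bd_def)
      then have "bd p q (q+1) < i \<or> bd p q (p+1) < j" using word_mult.prems by auto
      then have "a (q+1) = 0 \<or> b (p+1) = 0" using word_mult by auto
      then show ?thesis by auto
    qed simp
    show ?thesis using t3 t4 a0 b0 by (simp add: mf[OF tn pn qp])
  qed
qed

lemma long_zero:
  assumes pn: "p+2 < n" and qp: "q \<le> p" and T0: "\<forall>s\<in>T. s 0 = 0"
    and w: "is_word (sc_mult n (cst p q)) (bv 0 :: nat \<Rightarrow> 'a::field) T w k"
    and k: "2^p + 2^q < k"
  shows "w = (\<lambda>_. 0)"
proof
  fix t
  have "bd p q t < k" using bd_le[OF qp, of t] k by simp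
  moreover have "1 \<le> k" using k by simp
  ultimately show "w t = 0" using weight[OF pn qp T0 w] by blast
qed



lemma bv_mult: assumes pn: "p+2 < n" and qp: "q \<le> p" and s: "1 \<le> s" "s < n" and t: "1 \<le> t" "t < n"
  shows "sc_mult n (cst p q) (bv s) (bv t :: nat \<Rightarrow> 'a::field) =
    (if s = t \<and> s \<le> p then bv (s+1) else if s = q+1 \<and> t = p+1 then bv (p+2) else (\<lambda>_. 0))"
proof
  fix k
  show "sc_mult n (cst p q) (bv s) (bv t :: nat \<Rightarrow> 'a) k =
    (if s = t \<and> s \<le> p then bv (s+1) else if s = q+1 \<and> t = p+1 then bv (p+2) else (\<lambda>_. 0)) k"
  proof (cases "k < n")
    case False
    then show ?thesis using s t pn by (auto simp: sc_mult_def bv_def)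
  next
    case True
    show ?thesis using s t qp by (auto simp: mf[OF True pn qp] bv_def)
  qed
qed

definition S0 :: "nat \<Rightarrow> nat \<Rightarrow> (nat \<Rightarrow> 'a::field) set" where
  "S0 n p = insert (bv 1) (bv ` {p+3..<n})"

lemma S0_words:
  assumes pn: "p+2 < n" and qp: "q \<le> p"
    and w: "is_word (sc_mult n (cst p q)) (bv 0 :: nat \<Rightarrow> 'a::field) (S0 n p) w k"
  shows "w = (\<lambda>_. 0) \<or> (\<exists>t<n. w = bv t \<and> k = bd p q t)"
  using w
proof induction
  case word_one
  have "0 < n" "(0::nat) = bd p q 0" using pn by (auto simp: bd_def)
  then show ?case by blast
next
  case (word_gen s)
  then consider "s = bv 1" | t where "s = bv t" "p+3 \<le> t" "t < n" by (auto simp: S0_def)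
  then show ?case
  proof cases
    case 1
    have "1 < n" "(1::nat) = bd p q 1" using pn by (auto simp: bd_def)
    then show ?thesis using 1 by blast
  next
    case (2 t)
    have "(1::nat) = bd p q t" using 2 by (auto simp: bd_def)
    then show ?thesis using 2 by blast
  qed
next
  case (word_mult a i b j)
  show ?case
  proof (cases "a = (\<lambda>_. 0) \<or> b = (\<lambda>_. 0)")
    case True then show ?thesis by (auto simp: mult_zero_left mult_zero_right)
  next
    case False
    then obtain s t where s: "s < n" "a = bv s" "i = bd p q s" and t: "t < n" "b = bv t" "j = bd p q t"
      using word_mult by blast
    have s1: "1 \<le> s" using s word_mult.hyps(3) by (cases s) (auto simp: bd_def)
    have t1: "1 \<le> t" using t word_mult.hyps(4) by (cases t) (auto simp: bd_def)
    show ?thesis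
    proof (cases "s = t \<and> s \<le> p")
      case True
      then have "bd p q (s+1) = bd p q s + bd p q t" using s1 by (cases s) (auto simp: bd_def)
      then show ?thesis using True bv_mult[OF pn qp s1 s(1) t1 t(1)] s t pn by (intro disjI2 exI[of _ "s+1"]) auto
    next
      case nsq: False
      show ?thesis
      proof (cases "s = q+1 \<and> t = p+1")
        case True
        then have "bd p q (p+2) = bd p q s + bd p q t" using qp by (auto simp: bd_def)
        moreover have "sc_mult n (cst p q) (bv s) (bv t) = (bv (p+2) :: nat \<Rightarrow> 'a)"
          using bv_mult[OF pn qp s1 s(1) t1 t(1)] unfolding if_not_P[OF nsq] if_P[OF True] .
        ultimately show ?thesis using True s t pn by (intro disjI2 exI[of _ "p+2"]) auto
      next
        case False
        then show ?thesis using nsq bv_mult[OF pn qp s1 s(1) t1 t(1)] s t by auto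
      qed
    qed
  qed
qed

lemma chain_words:
  assumes pn: "p+2 < n" and qp: "q \<le> p"
  shows "1 \<le> t \<Longrightarrow> t \<le> p+1 \<Longrightarrow> is_word (sc_mult n (cst p q)) (bv 0 :: nat \<Rightarrow> 'a::field) (S0 n p) (bv t) (2^(t-1))"
proof (induction t)
  case 0 then show ?case by simp
next
  case (Suc t)
  show ?case
  proof (cases "t = 0")
    case True
    have "bv 1 \<in> S0 n p" by (simp add: S0_def)
    from is_word.word_gen[OF this, of "sc_mult n (cst p q)" "bv 0"] show ?thesis using True by simp
  next
    case False
    then have IH: "is_word (sc_mult n (cst p q)) (bv 0 :: nat \<Rightarrow> 'a::field) (S0 n p) (bv t) (2^(t-1))"
      using Suc by auto
    have "1 \<le> (2::nat)^(t-1)" by simp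
    then have w: "is_word (sc_mult n (cst p q)) (bv 0 :: nat \<Rightarrow> 'a::field) (S0 n p)
        (sc_mult n (cst p q) (bv t) (bv t)) (2^(t-1) + 2^(t-1))"
      using is_word.word_mult[OF IH IH] by blast
    have "sc_mult n (cst p q) (bv t) (bv t) = (bv (Suc t) :: nat \<Rightarrow> 'a)"
      using bv_mult[OF pn qp, of t t] False Suc.prems pn by auto
    moreover have "(2::nat)^(t-1) + 2^(t-1) = 2^(Suc t - 1)" using False by (cases t) auto
    ultimately show ?thesis using w by simp
  qed
qed

lemma all_words:
  assumes pn: "p+2 < n" and qp: "q \<le> p" and t: "t < n"
  shows "\<exists>k. is_word (sc_mult n (cst p q)) (bv 0 :: nat \<Rightarrow> 'a::field) (S0 n p) (bv t) k \<and> k = bd p q t"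
proof -
  consider "t = 0" | "1 \<le> t \<and> t \<le> p+1" | "t = p+2" | "p+3 \<le> t" by linarith
  then show ?thesis
  proof cases
    case 1 then show ?thesis by (auto simp: bd_def intro: is_word.word_one)
  next
    case 2 then show ?thesis using chain_words[OF pn qp, of t] by (auto simp: bd_def)
  next
    case 3
    have a: "is_word (sc_mult n (cst p q)) (bv 0 :: nat \<Rightarrow> 'a::field) (S0 n p) (bv (q+1)) (2^q)"
      using chain_words[OF pn qp, of "q+1"] qp by auto
    have b: "is_word (sc_mult n (cst p q)) (bv 0 :: nat \<Rightarrow> 'a::field) (S0 n p) (bv (p+1)) (2^p)"
      using chain_words[OF pn qp, of "p+1"] by auto
    have "is_word (sc_mult n (cst p q)) (bv 0 :: nat \<Rightarrow> 'a::field) (S0 n p)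
        (sc_mult n (cst p q) (bv (q+1)) (bv (p+1))) (2^q + 2^p)"
      by (rule is_word.word_mult[OF a b]) simp_all
    moreover have "sc_mult n (cst p q) (bv (q+1)) (bv (p+1)) = (bv (p+2) :: nat \<Rightarrow> 'a)"
      using qp pn by (subst bv_mult[OF pn qp]) auto
    ultimately show ?thesis using 3 by (auto simp: bd_def add.commute)
  next
    case 4
    then have "bv t \<in> S0 n p" using t by (simp add: S0_def)
    from is_word.word_gen[OF this, of "sc_mult n (cst p q)" "bv 0"] show ?thesis using 4 by (simp add: bd_def)
  qed
qed



lemma bv_inj: "inj (bv :: nat \<Rightarrow> nat \<Rightarrow> 'a::field)"
proof (rule injI)
  fix s t assume "(bv s :: nat \<Rightarrow> 'a) = bv t"
  then have "(bv s :: nat \<Rightarrow> 'a) s = bv t s" by simp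
  then show "s = t" by (auto simp: bv_def split: if_splits)
qed

lemma vecs_span: "vecs n \<subseteq> lin_span ((bv :: nat \<Rightarrow> nat \<Rightarrow> 'a::field) ` {..<n})"
proof
  fix x :: "nat \<Rightarrow> 'a" assume x: "x \<in> vecs n"
  define f where "f w = (\<Sum>t<n. w t * x t)" for w :: "nat \<Rightarrow> 'a"
  have "x = (\<lambda>k. \<Sum>w\<in>bv ` {..<n}. f w * w k)"
  proof
    fix k
    have "(\<Sum>w\<in>bv ` {..<n}. f w * w k) = (\<Sum>s<n. f (bv s) * bv s k)"
      by (subst sum.reindex) (auto intro: inj_on_subset[OF bv_inj])
    also have "\<dots> = (\<Sum>s<n. x s * bv s k)"
    proof (intro sum.cong refl)
      fix s assume "s \<in> {..<n}"
      have "f (bv s) = (\<Sum>t<n. if t = s then x t else 0)" unfolding f_def bv_def by (intro sum.cong) auto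
      also have "\<dots> = x s" using \<open>s \<in> {..<n}\<close> by simp
      finally have "f (bv s) = x s" .
      then show "f (bv s) * bv s k = x s * bv s k" by simp
    qed
    also have "\<dots> = x k" using x by (auto simp: bv_def vecs_def if_distrib cong: if_cong)
    finally show "x k = (\<Sum>w\<in>bv ` {..<n}. f w * w k)" by simp
  qed
  then show "x \<in> lin_span (bv ` {..<n})" unfolding lin_span_def
    by (intro CollectI exI[of _ "bv ` {..<n}"] exI[of _ f]) auto
qed

lemma S0_vecs: "p+2 < n \<Longrightarrow> S0 n p \<subseteq> (vecs n :: (nat \<Rightarrow> 'a::field) set)"
  by (auto simp: S0_def intro!: bv_vecs)

lemma words_in_vecs:
  assumes "e \<in> vecs n" "S \<subseteq> vecs n"
  shows "lin_span {w. \<exists>k. is_word (sc_mult n c) e S w k} \<subseteq> vecs n"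
  using assms by (intro span_sub[OF subsp_vecs]) (auto intro: word_vecs)

lemma L_in_vecs:
  assumes "e \<in> vecs n" "S \<subseteq> vecs n"
  shows "L_words n c e S i \<subseteq> vecs n"
  unfolding L_words_def using assms by (intro span_sub[OF subsp_vecs]) (auto intro: word_vecs)

lemma lower:
  assumes pn: "p+2 < n" and qp: "q \<le> p"
  shows "generating_set n (cst p q) (bv 0 :: nat \<Rightarrow> 'a::field) (S0 n p) \<and>
         set_length n (cst p q) (bv 0 :: nat \<Rightarrow> 'a::field) (S0 n p) = 2^p + 2^q"
proof -
  let ?c = "cst p q" and ?e = "bv 0 :: nat \<Rightarrow> 'a" and ?S = "S0 n p :: (nat \<Rightarrow> 'a) set"
  let ?m = "2^p + 2^q :: nat"
  have ev: "?e \<in> vecs n" using pn by (intro bv_vecs) simp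
  have Sv: "?S \<subseteq> vecs n" using S0_vecs[OF pn] .
  have "bv ` {..<n} \<subseteq> {w. \<exists>k\<le>?m. is_word (sc_mult n ?c) ?e ?S w k}"
  proof
    fix w assume "w \<in> (bv ` {..<n} :: (nat \<Rightarrow> 'a) set)"
    then obtain t where t: "t < n" "w = bv t" by auto
    then show "w \<in> {w. \<exists>k\<le>?m. is_word (sc_mult n ?c) ?e ?S w k}"
      using all_words[OF pn qp t(1)] bd_le[OF qp, of t] by auto
  qed
  then have vL: "vecs n \<subseteq> L_words n ?c ?e ?S ?m"
    using vecs_span[of n] span_mono unfolding L_words_def by blast
  have Lm: "L_words n ?c ?e ?S ?m = vecs n" using vL L_in_vecs[OF ev Sv] by blast
  have gen: "generating_set n ?c ?e ?S"
    unfolding generating_set_def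
  proof (intro conjI)
    show "finite ?S" by (simp add: S0_def)
    show "?S \<subseteq> vecs n" by (rule Sv)
    have "L_words n ?c ?e ?S ?m \<subseteq> lin_span {w. \<exists>k. is_word (sc_mult n ?c) ?e ?S w k}"
      unfolding L_words_def by (rule span_mono) blast
    then show "lin_span {w. \<exists>k. is_word (sc_mult n ?c) ?e ?S w k} = vecs n"
      using vL words_in_vecs[OF ev Sv] by blast
  qed
  have Lsmall: "L_words n ?c ?e ?S (?m - 1) \<subseteq> {x. x (p+2) = 0}"
    unfolding L_words_def
  proof (rule span_sub)
    show "subsp {x :: nat \<Rightarrow> 'a. x (p+2) = 0}" by (simp add: subsp_def)
    show "{w. \<exists>k\<le>?m - 1. is_word (sc_mult n ?c) ?e ?S w k} \<subseteq> {x. x (p + 2) = 0}"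
    proof
      fix w assume "w \<in> {w. \<exists>k\<le>?m - 1. is_word (sc_mult n ?c) ?e ?S w k}"
      then obtain k where k: "k \<le> ?m - 1" "is_word (sc_mult n ?c) ?e ?S w k" by auto
      have m1: "1 \<le> ?m" using one_le_m[of p q] by simp
      from S0_words[OF pn qp k(2)] show "w \<in> {x. x (p + 2) = 0}"
      proof
        assume "\<exists>t<n. w = bv t \<and> k = bd p q t"
        then obtain t where t: "w = bv t" "k = bd p q t" by auto
        have "t \<noteq> p+2" using t k(1) m1 by (auto simp: bd_def)
        then show ?thesis using t by (simp add: bv_def)
      qed simp
    qed
  qed
  have notv: "\<not> vecs n \<subseteq> L_words n ?c ?e ?S (?m - 1)"
  proof
    assume "vecs n \<subseteq> L_words n ?c ?e ?S (?m - 1)"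
    moreover have "(bv (p+2) :: nat \<Rightarrow> 'a) \<in> vecs n" using pn by (intro bv_vecs)
    ultimately have "(bv (p+2) :: nat \<Rightarrow> 'a) \<in> {x. x (p+2) = 0}" using Lsmall by blast
    then show False by (simp add: bv_def)
  qed
  have "set_length n ?c ?e ?S = ?m"
    unfolding set_length_def
  proof (rule Least_equality)
    show "L_words n ?c ?e ?S ?m = vecs n" by (rule Lm)
    fix y assume y: "L_words n ?c ?e ?S y = vecs n"
    show "?m \<le> y"
    proof (rule ccontr)
      assume "\<not> ?m \<le> y"
      then have "y \<le> ?m - 1" by simp
      then have "L_words n ?c ?e ?S y \<subseteq> L_words n ?c ?e ?S (?m - 1)" by (rule L_mono)
      then show False using y notv by simp
    qed
  qed
  then show ?thesis using gen by simp
qed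

lemma upper:
  assumes pn: "p+2 < n" and qp: "q \<le> p"
    and gen: "generating_set n (cst p q) (bv 0 :: nat \<Rightarrow> 'a::field) S"
  shows "set_length n (cst p q) (bv 0 :: nat \<Rightarrow> 'a::field) S \<le> 2^p + 2^q"
proof -
  let ?c = "cst p q" and ?e = "bv 0 :: nat \<Rightarrow> 'a"
  let ?m = "2^p + 2^q :: nat"
  have unit: "is_unit n ?c ?e" by (rule unit_ok[OF pn qp])
  have ev: "?e \<in> vecs n" using pn by (intro bv_vecs) simp
  have Sv: "S \<subseteq> vecs n" and span: "lin_span {w. \<exists>k. is_word (sc_mult n ?c) ?e S w k} = vecs n"
    using gen by (auto simp: generating_set_def)
  define S' where "S' = (\<lambda>s. \<lambda>k. s k - s 0 * ?e k) ` S"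
  have S'v: "S' \<subseteq> vecs n" using Sv ev unfolding S'_def vecs_def by auto
  have T0: "\<forall>s\<in>S'. s 0 = 0" unfolding S'_def by (auto simp: bv_def)
  have TS1: "\<exists>s\<in>S'. \<exists>\<alpha>. t = (\<lambda>k. s k + \<alpha> * ?e k)" if "t \<in> S" for t
  proof -
    show ?thesis
    proof (rule bexI[of _ "\<lambda>k. t k - t 0 * ?e k"])
      show "\<exists>\<alpha>. t = (\<lambda>k. (\<lambda>k. t k - t 0 * ?e k) k + \<alpha> * ?e k)"
        by (intro exI[of _ "t 0"]) simp
      show "(\<lambda>k. t k - t 0 * ?e k) \<in> S'" using that unfolding S'_def by blast
    qed
  qed
  have TS2: "\<exists>s\<in>S. \<exists>\<alpha>. t = (\<lambda>k. s k + \<alpha> * ?e k)" if tS: "t \<in> S'" for t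
  proof -
    obtain s where s: "s \<in> S" "t = (\<lambda>k. s k - s 0 * ?e k)" using tS unfolding S'_def by blast
    then have "t = (\<lambda>k. s k + (- s 0) * ?e k)" by simp
    then show ?thesis using s(1) by blast
  qed
  have A: "L_words n ?c ?e S' ?m \<subseteq> L_words n ?c ?e S ?m"
    unfolding L_words_def[of n ?c ?e S']
  proof (rule span_sub)
    show "subsp (L_words n ?c ?e S ?m)" unfolding L_words_def by (rule subsp_span)
    show "{w. \<exists>k\<le>?m. is_word (sc_mult n ?c) ?e S' w k} \<subseteq> L_words n ?c ?e S ?m"
    proof
      fix w assume "w \<in> {w. \<exists>k\<le>?m. is_word (sc_mult n ?c) ?e S' w k}"
      then obtain k where k: "k \<le> ?m" "is_word (sc_mult n ?c) ?e S' w k" by auto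
      have "w \<in> L_words n ?c ?e S k" by (rule transfer[OF unit Sv TS2 k(2)])
      then show "w \<in> L_words n ?c ?e S ?m" using L_mono[OF k(1)] by blast
    qed
  qed
  have B: "L_words n ?c ?e S' k \<subseteq> L_words n ?c ?e S' ?m" for k
    unfolding L_words_def[of n ?c ?e S' k]
  proof (rule span_sub)
    show "subsp (L_words n ?c ?e S' ?m)" unfolding L_words_def by (rule subsp_span)
    show "{w. \<exists>k'\<le>k. is_word (sc_mult n ?c) ?e S' w k'} \<subseteq> L_words n ?c ?e S' ?m"
    proof
      fix w assume "w \<in> {w. \<exists>k'\<le>k. is_word (sc_mult n ?c) ?e S' w k'}"
      then obtain k' where k': "is_word (sc_mult n ?c) ?e S' w k'" by auto
      show "w \<in> L_words n ?c ?e S' ?m"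
      proof (cases "k' \<le> ?m")
        case True then show ?thesis by (rule word_L[OF k'])
      next
        case False
        then have "w = (\<lambda>_. 0)" using long_zero[OF pn qp T0 k'] by simp
        then show ?thesis using subspD(1)[OF subsp_span] unfolding L_words_def by simp
      qed
    qed
  qed
  have "lin_span {w. \<exists>k. is_word (sc_mult n ?c) ?e S w k} \<subseteq> L_words n ?c ?e S ?m"
  proof (rule span_sub)
    show "subsp (L_words n ?c ?e S ?m)" unfolding L_words_def by (rule subsp_span)
    show "{w. \<exists>k. is_word (sc_mult n ?c) ?e S w k} \<subseteq> L_words n ?c ?e S ?m"
    proof
      fix w assume "w \<in> {w. \<exists>k. is_word (sc_mult n ?c) ?e S w k}"
      then obtain k where k: "is_word (sc_mult n ?c) ?e S w k" by auto
      have "w \<in> L_words n ?c ?e S' k" by (rule transfer[OF unit S'v TS1 k])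
      then show "w \<in> L_words n ?c ?e S ?m" using A B by blast
    qed
  qed
  then have "L_words n ?c ?e S ?m = vecs n" using span L_in_vecs[OF ev Sv] by blast
  then show ?thesis unfolding set_length_def by (rule Least_le)
qed

theorem proposition4p4:
  fixes n p q :: nat
  assumes "n > 4" and "2 \<le> p" and "p \<le> n - 3" and "q \<le> p"
  shows "\<exists>(c :: nat \<Rightarrow> nat \<Rightarrow> nat \<Rightarrow> 'a::field) e.
           is_unit n c e \<and> algebra_length_is n c e (2 ^ p + 2 ^ q)"
proof -
  have pn: "p + 2 < n" using assms by linarith
  have qp: "q \<le> p" by (rule assms(4))
  show ?thesis
  proof (intro exI conjI)
    show "is_unit n (cst p q) (bv 0 :: nat \<Rightarrow> 'a)" by (rule unit_ok[OF pn qp])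
    show "algebra_length_is n (cst p q) (bv 0 :: nat \<Rightarrow> 'a) (2 ^ p + 2 ^ q)"
      unfolding algebra_length_is_def
      using lower[OF pn qp] upper[OF pn qp] by blast
  qed
qed


end
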